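(* Let $\epsilon\in\mathbb C\setminus\{0\}$, $\eta_1(x,y;z)=(1-xz)^{-\epsilon}e^{yz}=\sum_{k\ge0}F_1^k(x,y)z^k$, so $F^k_1(x,y)=\sum_{i+j=k}\frac{(\epsilon)_i}{i!\,j!}x^iy^j$ with $(\epsilon)_i=\epsilon(\epsilon+1)\cdots(\epsilon+i-1)$. Then: (a) $x\frac{\partial^2\eta_1}{\partial x\partial y}=\frac{\partial\eta_1}{\partial x}-\epsilon\frac{\partial\eta_1}{\partial y}$, and $\frac{\partial F_1^{k+1}}{\partial y}=F_1^k$, $\frac1\epsilon\frac{\partial F_1^{k+1}}{\partial x}=\sum_{i+j=k}x^iF_1^j$ for all $k\ge0$. (b) Let $m\ge1$, $\Phi_1(\mathbf t;x,y)=\sum_{k=0}^m t_kF_1^{k+1}(x,y)$, and let $(u_1(\mathbf t),u_2(\mathbf t))$ be a $C^1$ map with $\partial_x\Phi_1=\partial_y\Phi_1=0$ at $(x,y)=(u_1,u_2)$, such that at this point $u_1\neq0$, $\partial_x^2\Phi_1\neq0$ and $\partial_y^2\Phi_1\neq0$. Then for $k=1,\dots,m$, \[ \frac{\partial u_1}{\partial t_k}=\lambda_1^k\frac{\partial u_1}{\partial t_0},\qquad \frac{\partial u_2}{\partial t_k}=\lambda_2^k\frac{\partial u_2}{\partial t_0}, \qquad \lambda_1^k=\sum_{i+j=k}u_1^iF_1^j(u_1,u_2),\quad \lambda_2^k=F_1^k(u_1,u_2). \] In particular for $k=1$: $\lambda_1^1=(1+\epsilon)u_1+u_2$, $\lambda_2^1=\epsilon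 u_1+u_2$. *)

theory Defs
  imports "HOL-Analysis.Analysis"
begin

definition F1 :: "complex \<Rightarrow> nat \<Rightarrow> complex \<Rightarrow> complex \<Rightarrow> complex" where
  "F1 eps k x y = (\<Sum>i\<le>k. pochhammer eps i / (fact i * fact (k - i)) * x ^ i * y ^ (k - i))"

definition eta1 :: "complex \<Rightarrow> complex \<Rightarrow> complex \<Rightarrow> complex \<Rightarrow> complex" where
  "eta1 eps x y z = (1 - x * z) powr (- eps) * exp (y * z)"

definition Phi1 :: "complex \<Rightarrow> nat \<Rightarrow> (nat \<Rightarrow> complex) \<Rightarrow> complex \<Rightarrow> complex \<Rightarrow> complex" where
  "Phi1 eps m t x y = (\<Sum>k\<le>m. t k * F1 eps (k + 1) x y)"

definition dx :: "(complex \<Rightarrow> complex \<Rightarrow> complex) \<Rightarrow> complex \<Rightarrow> complex \<Rightarrow> complex" where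
  "dx f x y = deriv (\<lambda>x'. f x' y) x"

definition dy :: "(complex \<Rightarrow> complex \<Rightarrow> complex) \<Rightarrow> complex \<Rightarrow> complex \<Rightarrow> complex" where
  "dy f x y = deriv (\<lambda>y'. f x y') y"

definition dt :: "((nat \<Rightarrow> complex) \<Rightarrow> complex) \<Rightarrow> nat \<Rightarrow> (nat \<Rightarrow> complex) \<Rightarrow> complex" where
  "dt u k t = deriv (\<lambda>s. u (t(k := s))) (t k)"

end

theory Submission
  imports Defs
begin

lemma F1_0[simp]: "F1 eps 0 x y = 1" by (simp add: F1_def)
lemma F1_1: "F1 eps 1 x y = eps * x + y" by (simp add: F1_def)
lemma F1_Suc0: "F1 eps (Suc 0) x y = eps * x + y" by (simp add: F1_def)

definition S :: "complex \<Rightarrow> nat \<Rightarrow> complex \<Rightarrow> complex \<Rightarrow> complex" where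
  "S eps k x y = (\<Sum>i\<le>k. x ^ i * F1 eps (k - i) x y)"

lemma S_0[simp]: "S eps 0 x y = 1" by (simp add: S_def)
lemma S_Suc: "S eps (Suc k) x y = F1 eps (Suc k) x y + x * S eps k x y"
  unfolding S_def sum.atMost_Suc_shift by (simp add: sum_distrib_left mult.assoc)

lemma cpow: "((\<lambda>x::complex. x ^ n) has_field_derivative of_nat n * x ^ (n - Suc 0)) (at x)"
  using DERIV_power[OF DERIV_ident, of n x UNIV] by simp

lemma D1_Suc: "((\<lambda>y. F1 eps (Suc k) x y) has_field_derivative F1 eps k x y) (at y)"
proof -
  have "((\<lambda>y. F1 eps (Suc k) x y) has_field_derivative
     (\<Sum>i\<le>Suc k. pochhammer eps i / (fact i * fact (Suc k - i)) * x ^ i * (of_nat (Suc k - i) * y ^ (Suc k - i - Suc 0)))) (at y)"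
    unfolding F1_def by (intro DERIV_sum DERIV_cmult cpow)
  moreover have "(\<Sum>i\<le>Suc k. pochhammer eps i / (fact i * fact (Suc k - i)) * x ^ i * (of_nat (Suc k - i) * y ^ (Suc k - i - Suc 0)))
     = F1 eps k x y"
  proof -
    have "(\<Sum>i\<le>k. pochhammer eps i / (fact i * fact (Suc k - i)) * x ^ i * (of_nat (Suc k - i) * y ^ (Suc k - i - Suc 0)))
        = (\<Sum>i\<le>k. pochhammer eps i / (fact i * fact (k - i)) * x ^ i * y ^ (k - i))"
    proof (intro sum.cong refl)
      fix i assume "i \<in> {..k}"
      then have i: "Suc k - i = Suc (k - i)" by auto
      show "pochhammer eps i / (fact i * fact (Suc k - i)) * x ^ i * (of_nat (Suc k - i) * y ^ (Suc k - i - Suc 0)) =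
         pochhammer eps i / (fact i * fact (k - i)) * x ^ i * y ^ (k - i)"
        unfolding i fact_Suc by (simp add: field_simps del: of_nat_Suc)
    qed
    then show ?thesis by (simp add: F1_def sum.atMost_Suc)
  qed
  ultimately show ?thesis by simp
qed

lemma hockey: "(\<Sum>i\<le>q. pochhammer eps i / fact i) = pochhammer (eps + 1) q / (fact q :: complex)"
proof (induction q)
  case 0 then show ?case by simp
next
  case (Suc q)
  have "(\<Sum>i\<le>Suc q. pochhammer eps i / fact i) = pochhammer (eps+1) q / fact q + eps * pochhammer (eps+1) q / (of_nat (Suc q) * fact q)"
    using Suc.IH by (simp add: pochhammer_rec del: of_nat_Suc)
  also have "\<dots> = pochhammer (eps+1) q * (eps + 1 + of_nat q) / (of_nat (Suc q) * fact q)"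
  proof -
    have nz: "of_nat (Suc q) \<noteq> (0::complex)" "fact q \<noteq> (0::complex)" by (simp_all del: of_nat_Suc)
    show ?thesis using nz by (simp add: field_simps del: of_nat_Suc) (simp add: algebra_simps)
  qed
  also have "\<dots> = pochhammer (eps + 1) (Suc q) / fact (Suc q)"
    by (simp add: pochhammer_Suc del: of_nat_Suc)
  finally show ?case .
qed

lemma dsum: "(\<Sum>p\<le>k. \<Sum>i\<le>k-p. h p i) = (\<Sum>q\<le>k. \<Sum>i\<le>q. h (q-i) i)"
  for h :: "nat \<Rightarrow> nat \<Rightarrow> complex"
proof -
  have "(\<Sum>p\<le>k. \<Sum>i\<le>k-p. h p i) = (\<Sum>(p,i)\<in>Sigma {..k} (\<lambda>p. {..k-p}). h p i)"
    by (simp add: sum.Sigma)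
  also have "Sigma {..k} (\<lambda>p. {..k-p}) = {(p,i). p+i \<le> k}" by auto
  also have "(\<Sum>(p,i)\<in>{(p,i). p+i\<le>k}. h p i) = (\<Sum>(i,p)\<in>{(i,p). i+p\<le>k}. h p i)"
    by (rule sum.reindex_bij_witness[of _ "\<lambda>(a,b). (b,a)" "\<lambda>(a,b). (b,a)"]) auto
  also have "\<dots> = (\<Sum>q\<le>k. \<Sum>i\<le>q. h (q-i) i)" by (rule sum.triangle_reindex_eq)
  finally show ?thesis .
qed

lemma S_alt: "S eps k x y = (\<Sum>q\<le>k. pochhammer (eps+1) q / (fact q * fact (k - q)) * x ^ q * y ^ (k - q))"
proof -
  have "S eps k x y = (\<Sum>p\<le>k. \<Sum>i\<le>k-p. x ^ p * (pochhammer eps i / (fact i * fact (k - p - i)) * x ^ i * y ^ (k - p - i)))"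
    by (simp add: S_def F1_def sum_distrib_left)
  also have "\<dots> = (\<Sum>q\<le>k. \<Sum>i\<le>q. x ^ (q - i) * (pochhammer eps i / (fact i * fact (k - (q - i) - i)) * x ^ i * y ^ (k - (q - i) - i)))"
    by (rule dsum)
  also have "\<dots> = (\<Sum>q\<le>k. (\<Sum>i\<le>q. pochhammer eps i / fact i) * (x ^ q * y ^ (k - q) / fact (k - q)))"
  proof (intro sum.cong refl)
    fix q assume q: "q \<in> {..k}"
    have "(\<Sum>i\<le>q. x ^ (q - i) * (pochhammer eps i / (fact i * fact (k - (q - i) - i)) * x ^ i * y ^ (k - (q - i) - i)))
       = (\<Sum>i\<le>q. pochhammer eps i / fact i * (x ^ q * y ^ (k - q) / fact (k - q)))"
    proof (intro sum.cong refl)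
      fix i assume i: "i \<in> {..q}"
      then have e1: "k - (q - i) - i = k - q" using q by auto
      have e2: "x ^ (q - i) * x ^ i = x ^ q" using i by (simp add: power_add[symmetric])
      show "x ^ (q - i) * (pochhammer eps i / (fact i * fact (k - (q - i) - i)) * x ^ i * y ^ (k - (q - i) - i))
          = pochhammer eps i / fact i * (x ^ q * y ^ (k - q) / fact (k - q))"
        unfolding e1 e2[symmetric] by (simp add: field_simps)
    qed
    also have "\<dots> = (\<Sum>i\<le>q. pochhammer eps i / fact i) * (x ^ q * y ^ (k - q) / fact (k - q))"
      by (rule sum_distrib_right[symmetric])
    finally show "(\<Sum>i\<le>q. x ^ (q - i) * (pochhammer eps i / (fact i * fact (k - (q - i) - i)) * x ^ i * y ^ (k - (q - i) - i)))
       = (\<Sum>i\<le>q. pochhammer eps i / fact i) * (x ^ q * y ^ (k - q) / fact (k - q))" .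
  qed
  also have "\<dots> = (\<Sum>q\<le>k. pochhammer (eps+1) q / (fact q * fact (k - q)) * x ^ q * y ^ (k - q))"
    by (simp add: hockey ac_simps)
  finally show ?thesis .
qed

lemma D2_Suc: "((\<lambda>x. F1 eps (Suc k) x y) has_field_derivative eps * S eps k x y) (at x)"
proof -
  have "((\<lambda>x. F1 eps (Suc k) x y) has_field_derivative
     (\<Sum>i\<le>Suc k. pochhammer eps i / (fact i * fact (Suc k - i)) * (of_nat i * x ^ (i - Suc 0)) * y ^ (Suc k - i))) (at x)"
    unfolding F1_def by (intro DERIV_sum DERIV_cmult_right DERIV_cmult cpow)
  moreover have "(\<Sum>i\<le>Suc k. pochhammer eps i / (fact i * fact (Suc k - i)) * (of_nat i * x ^ (i - Suc 0)) * y ^ (Suc k - i))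
     = eps * S eps k x y"
  proof -
    have "(\<Sum>i\<le>k. pochhammer eps (Suc i) / (fact (Suc i) * fact (Suc k - Suc i)) * (of_nat (Suc i) * x ^ (Suc i - Suc 0)) * y ^ (Suc k - Suc i))
        = (\<Sum>i\<le>k. eps * (pochhammer (eps+1) i / (fact i * fact (k - i)) * x ^ i * y ^ (k - i)))"
    proof (intro sum.cong refl)
      fix i assume "i \<in> {..k}"
      show "pochhammer eps (Suc i) / (fact (Suc i) * fact (Suc k - Suc i)) * (of_nat (Suc i) * x ^ (Suc i - Suc 0)) * y ^ (Suc k - Suc i)
         = eps * (pochhammer (eps+1) i / (fact i * fact (k - i)) * x ^ i * y ^ (k - i))"
        by (simp add: pochhammer_rec fact_Suc field_simps del: of_nat_Suc)
    qed
    then show ?thesis unfolding sum.atMost_Suc_shift S_alt by (simp add: sum_distrib_left)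
  qed
  ultimately show ?thesis by simp
qed

lemma chain2:
  fixes f :: "complex \<Rightarrow> complex \<Rightarrow> complex"
  assumes fD: "((\<lambda>p. f (fst p) (snd p)) has_derivative D) (at (a s0, b s0))"
  and fx: "((\<lambda>x. f x (b s0)) has_field_derivative fx) (at (a s0))"
  and fy: "((\<lambda>y. f (a s0) y) has_field_derivative fy) (at (b s0))"
  and a: "(a has_field_derivative a') (at s0)" and b: "(b has_field_derivative b') (at s0)"
  shows "((\<lambda>s. f (a s) (b s)) has_field_derivative (fx * a' + fy * b')) (at s0)"
proof -
  have bl: "bounded_linear D" using fD has_derivative_bounded_linear by blast
  have "((\<lambda>x. (x, b s0)) has_derivative (\<lambda>h. (h, 0))) (at (a s0))"
    by (intro derivative_eq_intros) auto
  from has_derivative_compose[OF this, of "\<lambda>p. f (fst p) (snd p)" D] fD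
  have h1: "((\<lambda>x. f x (b s0)) has_derivative (\<lambda>h. D (h, 0))) (at (a s0))" by simp
  have e1: "\<And>h. D (h, 0) = fx * h"
    using has_derivative_unique[OF h1 fx[unfolded has_field_derivative_def]] by metis
  have "((\<lambda>y. (a s0, y)) has_derivative (\<lambda>h. (0, h))) (at (b s0))"
    by (intro derivative_eq_intros) auto
  from has_derivative_compose[OF this, of "\<lambda>p. f (fst p) (snd p)" D] fD
  have h2: "((\<lambda>y. f (a s0) y) has_derivative (\<lambda>h. D (0, h))) (at (b s0))" by simp
  have e2: "\<And>h. D (0, h) = fy * h"
    using has_derivative_unique[OF h2 fy[unfolded has_field_derivative_def]] by metis
  have e3: "\<And>u v. D (u, v) = fx * u + fy * v"
  proof -
    fix u v :: complex
    have "D (u, v) = D ((u, 0) + (0, v))" by simp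
    also have "\<dots> = D (u, 0) + D (0, v)" by (rule linear_add[OF bounded_linear.linear[OF bl]])
    finally show "D (u, v) = fx * u + fy * v" using e1 e2 by simp
  qed
  have "((\<lambda>s. (a s, b s)) has_derivative (\<lambda>h. (a' * h, b' * h))) (at s0)"
    using a b unfolding has_field_derivative_def by (intro has_derivative_Pair)
  from has_derivative_compose[OF this, of "\<lambda>p. f (fst p) (snd p)" D] fD
  have "((\<lambda>s. f (a s) (b s)) has_derivative (\<lambda>h. D (a' * h, b' * h))) (at s0)" by simp
  moreover have "(\<lambda>h. D (a' * h, b' * h)) = (*) (fx * a' + fy * b')"
    by (rule ext) (simp add: e3 algebra_simps)
  ultimately show ?thesis unfolding has_field_derivative_def by simp
qed

lemma DF1y: "((\<lambda>y. F1 eps j x y) has_field_derivative (if j=0 then 0 else F1 eps (j-1) x y)) (at y)"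
  using D1_Suc[of eps "j - 1" x y] by (cases j) auto

lemma DF1x: "((\<lambda>x. F1 eps j x y) has_field_derivative (if j=0 then 0 else eps * S eps (j-1) x y)) (at x)"
  using D2_Suc[of eps "j - 1" y x] by (cases j) auto

lemma DSy: "((\<lambda>y. S eps k x y) has_field_derivative (if k=0 then 0 else S eps (k-1) x y)) (at y)"
proof -
  have "((\<lambda>y. S eps k x y) has_field_derivative (\<Sum>i\<le>k. x ^ i * (if k - i = 0 then 0 else F1 eps (k - i - 1) x y))) (at y)"
    unfolding S_def by (intro DERIV_sum DERIV_cmult DF1y)
  moreover have "(\<Sum>i\<le>k. x ^ i * (if k - i = 0 then 0 else F1 eps (k - i - 1) x y)) = (if k=0 then 0 else S eps (k-1) x y)"
  proof (cases k)
    case (Suc k')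
    have "(\<Sum>i\<le>k'. x ^ i * (if Suc k' - i = 0 then 0 else F1 eps (Suc k' - i - 1) x y)) = S eps k' x y"
      unfolding S_def by (intro sum.cong refl) (auto simp: Suc_diff_le)
    then show ?thesis using Suc by (simp add: sum.atMost_Suc)
  qed simp
  ultimately show ?thesis by simp
qed

lemmas pd = has_derivative_sum has_derivative_mult has_derivative_const has_derivative_power has_derivative_fst has_derivative_snd has_derivative_ident

lemma JD_Gx: "\<exists>D. ((\<lambda>p. c * (\<Sum>j\<le>m. t j * S eps j (fst p) (snd p))) has_derivative D) (at p0)"
  unfolding S_def F1_def by (rule exI) (rule pd)+

lemma JD_Gy: "\<exists>D. ((\<lambda>p. (\<Sum>j\<le>m. t j * F1 eps j (fst p) (snd p))) has_derivative D) (at p0)"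
  unfolding F1_def by (rule exI) (rule pd)+

lemma JD_S1: "\<exists>D. ((\<lambda>p. c * S eps k (fst p) (snd p)) has_derivative D) (at p0)"
  unfolding S_def F1_def by (rule exI) (rule pd)+

lemma JD_F1: "\<exists>D. ((\<lambda>p. F1 eps k (fst p) (snd p)) has_derivative D) (at p0)"
  unfolding F1_def by (rule exI) (rule pd)+

lemma DSx_ex: "\<exists>D. ((\<lambda>x. S eps k x y) has_field_derivative D) (at x)"
  unfolding S_def by (rule exI) (rule DERIV_sum DERIV_mult cpow DF1x)+

lemma DF1x_ex: "\<exists>D. ((\<lambda>x. F1 eps k x y) has_field_derivative D) (at x)"
  using DF1x by blast

lemma DF1y_ex: "\<exists>D. ((\<lambda>y. F1 eps k x y) has_field_derivative D) (at y)"
  using DF1y by blast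

lemma DSy_ex: "\<exists>D. ((\<lambda>y. S eps k x y) has_field_derivative D) (at y)"
  using DSy by blast

lemma DGx_x_ex: "\<exists>D. ((\<lambda>x. c * (\<Sum>j\<le>m. t j * S eps j x y)) has_field_derivative D) (at x)"
proof -
  have "\<forall>j. \<exists>D. ((\<lambda>x. S eps j x y) has_field_derivative D) (at x)" using DSx_ex by blast
  then obtain D where D: "\<And>j. ((\<lambda>x. S eps j x y) has_field_derivative D j) (at x)" by metis
  have "((\<lambda>x. c * (\<Sum>j\<le>m. t j * S eps j x y)) has_field_derivative c * (\<Sum>j\<le>m. t j * D j)) (at x)"
    by (intro DERIV_cmult DERIV_sum D)
  then show ?thesis by blast
qed

lemma DGy_y_ex: "\<exists>D. ((\<lambda>y. (\<Sum>j\<le>m. t j * F1 eps j x y)) has_field_derivative D) (at y)"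
  by (rule exI) (rule DERIV_sum DERIV_cmult DF1y)+

lemma D2': "((\<lambda>x. F1 eps (k+1) x y) has_field_derivative eps * S eps k x y) (at x)"
  using D2_Suc by simp
lemma D1': "((\<lambda>y. F1 eps (k+1) x y) has_field_derivative F1 eps k x y) (at y)"
  using D1_Suc by simp

lemma dx_Phi: "dx (Phi1 eps m t) = (\<lambda>x y. eps * (\<Sum>j\<le>m. t j * S eps j x y))"
proof (intro ext)
  fix x y
  have "((\<lambda>x. Phi1 eps m t x y) has_field_derivative (\<Sum>j\<le>m. t j * (eps * S eps j x y))) (at x)"
    unfolding Phi1_def by (intro DERIV_sum DERIV_cmult D2')
  then show "dx (Phi1 eps m t) x y = eps * (\<Sum>j\<le>m. t j * S eps j x y)"
    unfolding dx_def by (simp add: DERIV_imp_deriv sum_distrib_left ac_simps)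
qed

lemma dy_Phi: "dy (Phi1 eps m t) = (\<lambda>x y. (\<Sum>j\<le>m. t j * F1 eps j x y))"
proof (intro ext)
  fix x y
  have "((\<lambda>y. Phi1 eps m t x y) has_field_derivative (\<Sum>j\<le>m. t j * F1 eps j x y)) (at y)"
    unfolding Phi1_def by (intro DERIV_sum DERIV_cmult D1')
  then show "dy (Phi1 eps m t) x y = (\<Sum>j\<le>m. t j * F1 eps j x y)"
    unfolding dy_def by (simp add: DERIV_imp_deriv)
qed

definition E :: "complex \<Rightarrow> nat \<Rightarrow> (nat \<Rightarrow> complex) \<Rightarrow> complex \<Rightarrow> complex \<Rightarrow> complex" where
  "E eps m t x y = (\<Sum>j\<le>m. t j * (if j = 0 then 0 else eps * S eps (j - 1) x y))"

lemma DGx_y: "((\<lambda>y. eps * (\<Sum>j\<le>m. t j * S eps j x y)) has_field_derivative E eps m t x y) (at y)"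
proof -
  have "((\<lambda>y. eps * (\<Sum>j\<le>m. t j * S eps j x y)) has_field_derivative
     eps * (\<Sum>j\<le>m. t j * (if j=0 then 0 else S eps (j-1) x y))) (at y)"
    by (intro DERIV_cmult DERIV_sum DSy)
  moreover have "eps * (\<Sum>j\<le>m. t j * (if j=0 then 0 else S eps (j-1) x y)) = E eps m t x y"
    unfolding E_def sum_distrib_left by (intro sum.cong refl) auto
  ultimately show ?thesis by simp
qed

lemma DGy_x: "((\<lambda>x. (\<Sum>j\<le>m. t j * F1 eps j x y)) has_field_derivative E eps m t x y) (at x)"
  unfolding E_def by (intro DERIV_sum DERIV_cmult DF1x)

lemma E_id: "x * E eps m t x y = eps * (\<Sum>j\<le>m. t j * S eps j x y) - eps * (\<Sum>j\<le>m. t j * F1 eps j x y)"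
proof -
  have "x * E eps m t x y = (\<Sum>j\<le>m. eps * (t j * S eps j x y) - eps * (t j * F1 eps j x y))"
    unfolding E_def sum_distrib_left
  proof (intro sum.cong refl)
    fix j
    show "x * (t j * (if j = 0 then 0 else eps * S eps (j - 1) x y)) = eps * (t j * S eps j x y) - eps * (t j * F1 eps j x y)"
      by (cases j) (auto simp: S_Suc algebra_simps)
  qed
  then show ?thesis by (simp add: sum_subtractf sum_distrib_left)
qed

lemma sum_upd: "(k::nat) \<le> m \<Longrightarrow> (\<Sum>j\<le>m. (t(k := s)) j * g j) = (\<Sum>j\<le>m. t j * g j) + (s - t k) * (g k :: complex)"
proof -
  assume k: "k \<le> m"
  have "(\<Sum>j\<le>m. (t(k := s)) j * g j) = s * g k + (\<Sum>j\<in>{..m}-{k}. t j * g j)"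
    using k by (subst sum.remove[OF finite_atMost, of k]) auto
  moreover have "(\<Sum>j\<le>m. t j * g j) = t k * g k + (\<Sum>j\<in>{..m}-{k}. t j * g j)"
    using k by (subst sum.remove[OF finite_atMost, of k]) auto
  ultimately show ?thesis by (simp add: algebra_simps)
qed

lemma zero_deriv:
  assumes "(h has_field_derivative L) (at x)" "open V" "x \<in> V" "\<And>s. s \<in> V \<Longrightarrow> h s = 0"
  shows "L = 0"
proof -
  have "((\<lambda>s. 0) has_field_derivative 0) (at x)" by simp
  from has_field_derivative_transform_within_open[OF this assms(2,3)] assms(4)
  have "(h has_field_derivative 0) (at x)" by metis
  with assms(1) show ?thesis using DERIV_unique by blast
qed

lemma line_deriv:
  fixes f g :: "complex \<Rightarrow> complex \<Rightarrow> complex"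
  assumes fD: "\<exists>D. ((\<lambda>p. f (fst p) (snd p)) has_derivative D) (at (a tt, b tt))"
  and fx: "((\<lambda>x. f x (b tt)) has_field_derivative fx) (at (a tt))"
  and fy: "((\<lambda>y. f (a tt) y) has_field_derivative fy) (at (b tt))"
  and gD: "\<exists>D. ((\<lambda>p. g (fst p) (snd p)) has_derivative D) (at (a tt, b tt))"
  and gx: "\<exists>D. ((\<lambda>x. g x (b tt)) has_field_derivative D) (at (a tt))"
  and gy: "\<exists>D. ((\<lambda>y. g (a tt) y) has_field_derivative D) (at (b tt))"
  and a: "(a has_field_derivative a') (at tt)" and b: "(b has_field_derivative b') (at tt)"
  and V: "open V" "tt \<in> V" "\<And>s. s \<in> V \<Longrightarrow> f (a s) (b s) + (s - tt) * g (a s) (b s) = 0"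
  shows "fx * a' + fy * b' + g (a tt) (b tt) = 0"
proof -
  obtain D1 where D1: "((\<lambda>p. f (fst p) (snd p)) has_derivative D1) (at (a tt, b tt))" using fD by blast
  obtain D2 where D2: "((\<lambda>p. g (fst p) (snd p)) has_derivative D2) (at (a tt, b tt))" using gD by blast
  obtain gx' where gx': "((\<lambda>x. g x (b tt)) has_field_derivative gx') (at (a tt))" using gx by blast
  obtain gy' where gy': "((\<lambda>y. g (a tt) y) has_field_derivative gy') (at (b tt))" using gy by blast
  have c1: "((\<lambda>s. f (a s) (b s)) has_field_derivative (fx * a' + fy * b')) (at tt)"
    by (rule chain2[OF D1 fx fy a b])
  have c2: "((\<lambda>s. g (a s) (b s)) has_field_derivative (gx' * a' + gy' * b')) (at tt)"
    by (rule chain2[OF D2 gx' gy' a b])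
  have "((\<lambda>s. f (a s) (b s) + (s - tt) * g (a s) (b s)) has_field_derivative
      (fx * a' + fy * b') + ((1 - 0) * g (a tt) (b tt) + (gx' * a' + gy' * b') * (tt - tt))) (at tt)"
    by (intro DERIV_add DERIV_mult c1 c2 DERIV_diff DERIV_ident DERIV_const)
  then have "((\<lambda>s. f (a s) (b s) + (s - tt) * g (a s) (b s)) has_field_derivative
      (fx * a' + fy * b' + g (a tt) (b tt))) (at tt)" by simp
  from zero_deriv[OF this V] show ?thesis .
qed

lemma open_line: "open U \<Longrightarrow> open {s::complex. t(k := s) \<in> U}"
proof -
  assume U: "open U"
  have "continuous_on UNIV (\<lambda>s::complex. t(k := s))"
  proof (rule continuous_on_coordinatewise_then_product)
    fix i
    show "continuous_on UNIV (\<lambda>s. (t(k := s)) i)"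
      by (cases "i = k") (auto intro: continuous_intros)
  qed
  from open_vimage[OF U this] show ?thesis by (simp add: vimage_def)
qed

lemma deriv_of_ex: "\<exists>D. (f has_field_derivative D) (at x) \<Longrightarrow> (f has_field_derivative deriv f x) (at x)"
  using DERIV_imp_deriv by metis

lemma eta_pde:
  assumes "1 - x*z \<notin> \<real>\<^sub>\<le>\<^sub>0"
  shows "x * dx (dy (\<lambda>x y. eta1 eps x y z)) x y = dx (\<lambda>x y. eta1 eps x y z) x y - eps * dy (\<lambda>x y. eta1 eps x y z) x y"
proof -
  have dyf: "dy (\<lambda>x y. eta1 eps x y z) = (\<lambda>x y. z * eta1 eps x y z)"
  proof (intro ext)
    fix x' y'
    have "((\<lambda>y. eta1 eps x' y z) has_field_derivative z * eta1 eps x' y' z) (at y')"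
      unfolding eta1_def by (auto intro!: derivative_eq_intros)
    then show "dy (\<lambda>x y. eta1 eps x y z) x' y' = z * eta1 eps x' y' z"
      unfolding dy_def by (simp add: DERIV_imp_deriv)
  qed
  have dxe: "((\<lambda>x. eta1 eps x y z) has_field_derivative eps * z * (1 - x*z) powr (-eps - 1) * exp (y*z)) (at x)"
    unfolding eta1_def using assms by (auto intro!: derivative_eq_intros)
  then have dxe': "((\<lambda>x. z * eta1 eps x y z) has_field_derivative z * (eps * z * (1 - x*z) powr (-eps - 1) * exp (y*z))) (at x)"
    by (rule DERIV_cmult)
  have nz: "1 - x * z \<noteq> 0" using assms by auto
  have pw: "(1 - x*z) powr (-eps) = (1 - x*z) powr (-eps - 1) * (1 - x*z)"
  proof -
    have "(1 - x*z) powr (-eps) = (1 - x*z) powr ((-eps - 1) + 1)" by simp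
    also have "\<dots> = (1 - x*z) powr (-eps - 1) * (1 - x*z)" by (simp only: powr_add powr_to_1)
    finally show ?thesis .
  qed
  show ?thesis
    unfolding dyf dx_def DERIV_imp_deriv[OF dxe] DERIV_imp_deriv[OF dxe']
    unfolding eta1_def pw by (simp add: algebra_simps)
qed

theorem mainTheorem8:
  fixes eps :: complex
  assumes eps: "eps \<noteq> 0"
  shows
   \<comment> \<open>(a)\<close>
   "(\<forall>x y z. 1 - x * z \<notin> \<real>\<^sub>\<le>\<^sub>0 \<longrightarrow>
        x * dx (dy (\<lambda>x y. eta1 eps x y z)) x y
          = dx (\<lambda>x y. eta1 eps x y z) x y - eps * dy (\<lambda>x y. eta1 eps x y z) x y)
    \<and> (\<forall>k x y. dy (F1 eps (k + 1)) x y = F1 eps k x y)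
    \<and> (\<forall>k x y. dx (F1 eps (k + 1)) x y / eps = (\<Sum>i\<le>k. x ^ i * F1 eps (k - i) x y))
   \<comment> \<open>(b)\<close>
    \<and> (\<forall>(m::nat) (U :: (nat \<Rightarrow> complex) set) (u1 :: (nat \<Rightarrow> complex) \<Rightarrow> complex) u2.
         m \<ge> 1 \<and> open U
         \<and> (\<forall>k\<le>m. \<forall>t\<in>U. (\<lambda>s. u1 (t(k := s))) field_differentiable at (t k)
                        \<and> (\<lambda>s. u2 (t(k := s))) field_differentiable at (t k))
         \<and> (\<forall>k\<le>m. continuous_on U (dt u1 k) \<and> continuous_on U (dt u2 k))
         \<and> (\<forall>t\<in>U. dx (Phi1 eps m t) (u1 t) (u2 t) = 0 \<and> dy (Phi1 eps m t) (u1 t) (u2 t) = 0)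
       \<longrightarrow> (\<forall>t\<in>U. u1 t \<noteq> 0
               \<and> dx (dx (Phi1 eps m t)) (u1 t) (u2 t) \<noteq> 0
               \<and> dy (dy (Phi1 eps m t)) (u1 t) (u2 t) \<noteq> 0
             \<longrightarrow> (\<forall>k\<in>{1..m}.
                   dt u1 k t = (\<Sum>i\<le>k. u1 t ^ i * F1 eps (k - i) (u1 t) (u2 t)) * dt u1 0 t
                 \<and> dt u2 k t = F1 eps k (u1 t) (u2 t) * dt u2 0 t)
               \<and> (\<Sum>i\<le>1. u1 t ^ i * F1 eps (1 - i) (u1 t) (u2 t)) = (1 + eps) * u1 t + u2 t
               \<and> F1 eps 1 (u1 t) (u2 t) = eps * u1 t + u2 t))"
proof -
  have A1: "\<forall>x y z. 1 - x * z \<notin> \<real>\<^sub>\<le>\<^sub>0 \<longrightarrow>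
        x * dx (dy (\<lambda>x y. eta1 eps x y z)) x y
          = dx (\<lambda>x y. eta1 eps x y z) x y - eps * dy (\<lambda>x y. eta1 eps x y z) x y"
    using eta_pde by blast
  have A2: "\<forall>k x y. dy (F1 eps (k + 1)) x y = F1 eps k x y"
    by (simp add: dy_def DERIV_imp_deriv[OF D1_Suc])
  have A3: "\<forall>k x y. dx (F1 eps (k + 1)) x y / eps = (\<Sum>i\<le>k. x ^ i * F1 eps (k - i) x y)"
    using eps by (simp add: dx_def DERIV_imp_deriv[OF D2_Suc] S_def)
  have B: "\<forall>(m::nat) (U :: (nat \<Rightarrow> complex) set) (u1 :: (nat \<Rightarrow> complex) \<Rightarrow> complex) u2.
         m \<ge> 1 \<and> open U
         \<and> (\<forall>k\<le>m. \<forall>t\<in>U. (\<lambda>s. u1 (t(k := s))) field_differentiable at (t k)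
                        \<and> (\<lambda>s. u2 (t(k := s))) field_differentiable at (t k))
         \<and> (\<forall>k\<le>m. continuous_on U (dt u1 k) \<and> continuous_on U (dt u2 k))
         \<and> (\<forall>t\<in>U. dx (Phi1 eps m t) (u1 t) (u2 t) = 0 \<and> dy (Phi1 eps m t) (u1 t) (u2 t) = 0)
       \<longrightarrow> (\<forall>t\<in>U. u1 t \<noteq> 0
               \<and> dx (dx (Phi1 eps m t)) (u1 t) (u2 t) \<noteq> 0
               \<and> dy (dy (Phi1 eps m t)) (u1 t) (u2 t) \<noteq> 0
             \<longrightarrow> (\<forall>k\<in>{1..m}.
                   dt u1 k t = (\<Sum>i\<le>k. u1 t ^ i * F1 eps (k - i) (u1 t) (u2 t)) * dt u1 0 t
                 \<and> dt u2 k t = F1 eps k (u1 t) (u2 t) * dt u2 0 t)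
               \<and> (\<Sum>i\<le>1. u1 t ^ i * F1 eps (1 - i) (u1 t) (u2 t)) = (1 + eps) * u1 t + u2 t
               \<and> F1 eps 1 (u1 t) (u2 t) = eps * u1 t + u2 t)"
  proof (intro allI impI)
    fix m :: nat and U :: "(nat \<Rightarrow> complex) set" and u1 u2 :: "(nat \<Rightarrow> complex) \<Rightarrow> complex"
    assume H: "m \<ge> 1 \<and> open U
         \<and> (\<forall>k\<le>m. \<forall>t\<in>U. (\<lambda>s. u1 (t(k := s))) field_differentiable at (t k)
                        \<and> (\<lambda>s. u2 (t(k := s))) field_differentiable at (t k))
         \<and> (\<forall>k\<le>m. continuous_on U (dt u1 k) \<and> continuous_on U (dt u2 k))
         \<and> (\<forall>t\<in>U. dx (Phi1 eps m t) (u1 t) (u2 t) = 0 \<and> dy (Phi1 eps m t) (u1 t) (u2 t) = 0)"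
    then have U: "open U"
      and diff: "\<And>k t. k \<le> m \<Longrightarrow> t \<in> U \<Longrightarrow> (\<lambda>s. u1 (t(k := s))) field_differentiable at (t k)
                        \<and> (\<lambda>s. u2 (t(k := s))) field_differentiable at (t k)"
      and crit: "\<And>t. t \<in> U \<Longrightarrow> dx (Phi1 eps m t) (u1 t) (u2 t) = 0 \<and> dy (Phi1 eps m t) (u1 t) (u2 t) = 0"
      by auto
    show "\<forall>t\<in>U. u1 t \<noteq> 0
               \<and> dx (dx (Phi1 eps m t)) (u1 t) (u2 t) \<noteq> 0
               \<and> dy (dy (Phi1 eps m t)) (u1 t) (u2 t) \<noteq> 0
             \<longrightarrow> (\<forall>k\<in>{1..m}.
                   dt u1 k t = (\<Sum>i\<le>k. u1 t ^ i * F1 eps (k - i) (u1 t) (u2 t)) * dt u1 0 t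
                 \<and> dt u2 k t = F1 eps k (u1 t) (u2 t) * dt u2 0 t)
               \<and> (\<Sum>i\<le>1. u1 t ^ i * F1 eps (1 - i) (u1 t) (u2 t)) = (1 + eps) * u1 t + u2 t
               \<and> F1 eps 1 (u1 t) (u2 t) = eps * u1 t + u2 t"
    proof (intro ballI impI)
      fix t assume tU: "t \<in> U"
      assume nd: "u1 t \<noteq> 0 \<and> dx (dx (Phi1 eps m t)) (u1 t) (u2 t) \<noteq> 0
               \<and> dy (dy (Phi1 eps m t)) (u1 t) (u2 t) \<noteq> 0"
      define Gx where "Gx = (\<lambda>x y. eps * (\<Sum>j\<le>m. t j * S eps j x y))"
      define Gy where "Gy = (\<lambda>x y. (\<Sum>j\<le>m. t j * F1 eps j x y))"
      have dxP: "\<And>t'. dx (Phi1 eps m t') = (\<lambda>x y. eps * (\<Sum>j\<le>m. t' j * S eps j x y))" by (rule dx_Phi)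
      have dyP: "\<And>t'. dy (Phi1 eps m t') = (\<lambda>x y. (\<Sum>j\<le>m. t' j * F1 eps j x y))" by (rule dy_Phi)
      have Axx: "dx Gx (u1 t) (u2 t) \<noteq> 0" using nd unfolding Gx_def dxP by simp
      have Byy: "dy Gy (u1 t) (u2 t) \<noteq> 0" using nd unfolding Gy_def dyP by simp
      have Ez: "E eps m t (u1 t) (u2 t) = 0"
      proof -
        have "u1 t * E eps m t (u1 t) (u2 t) = 0"
          using crit[OF tU] unfolding E_id dxP dyP by simp
        then show ?thesis using nd by simp
      qed
      have key1: "dx Gx (u1 t) (u2 t) * dt u1 k t + eps * S eps k (u1 t) (u2 t) = 0" if k: "k \<le> m" for k
      proof -
        let ?a = "\<lambda>s. u1 (t(k := s))" and ?b = "\<lambda>s. u2 (t(k := s))"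
        have ha: "(?a has_field_derivative dt u1 k t) (at (t k))"
          unfolding dt_def using diff[OF k tU] DERIV_deriv_iff_field_differentiable by blast
        have hb: "(?b has_field_derivative dt u2 k t) (at (t k))"
          unfolding dt_def using diff[OF k tU] DERIV_deriv_iff_field_differentiable by blast
        have "dx Gx (?a (t k)) (?b (t k)) * dt u1 k t + E eps m t (?a (t k)) (?b (t k)) * dt u2 k t
              + eps * S eps k (?a (t k)) (?b (t k)) = 0"
        proof (rule line_deriv[where f = Gx and g = "\<lambda>x y. eps * S eps k x y" and V = "{s. t(k := s) \<in> U}"
             and a = ?a and b = ?b and tt = "t k" and a' = "dt u1 k t" and b' = "dt u2 k t"
             and fx = "dx Gx (?a (t k)) (?b (t k))" and fy = "E eps m t (?a (t k)) (?b (t k))"])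
          show "\<exists>D. ((\<lambda>p. Gx (fst p) (snd p)) has_derivative D) (at (?a (t k), ?b (t k)))"
            unfolding Gx_def by (rule JD_Gx)
          show "((\<lambda>x. Gx x (?b (t k))) has_field_derivative dx Gx (?a (t k)) (?b (t k))) (at (?a (t k)))"
            unfolding dx_def by (rule deriv_of_ex) (unfold Gx_def, rule DGx_x_ex)
          show "((\<lambda>y. Gx (?a (t k)) y) has_field_derivative E eps m t (?a (t k)) (?b (t k))) (at (?b (t k)))"
            unfolding Gx_def by (rule DGx_y)
          show "\<exists>D. ((\<lambda>p. eps * S eps k (fst p) (snd p)) has_derivative D) (at (?a (t k), ?b (t k)))"
            by (rule JD_S1)
          show "\<exists>D. ((\<lambda>x. eps * S eps k x (?b (t k))) has_field_derivative D) (at (?a (t k)))"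
            using DSx_ex DERIV_cmult by blast
          show "\<exists>D. ((\<lambda>y. eps * S eps k (?a (t k)) y) has_field_derivative D) (at (?b (t k)))"
            using DSy_ex DERIV_cmult by blast
          show "(?a has_field_derivative dt u1 k t) (at (t k))" by (rule ha)
          show "(?b has_field_derivative dt u2 k t) (at (t k))" by (rule hb)
          show "open {s. t(k := s) \<in> U}" by (rule open_line[OF U])
          show "t k \<in> {s. t(k := s) \<in> U}" using tU by simp
          fix s assume "s \<in> {s. t(k := s) \<in> U}"
          then have "t(k := s) \<in> U" by simp
          from crit[OF this] have "eps * (\<Sum>j\<le>m. (t(k := s)) j * S eps j (?a s) (?b s)) = 0"
            unfolding dxP by simp
          then show "Gx (?a s) (?b s) + (s - t k) * (eps * S eps k (?a s) (?b s)) = 0"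
            unfolding Gx_def sum_upd[OF k] by (simp add: algebra_simps)
        qed
        then show ?thesis using Ez by simp
      qed
      have key2: "dy Gy (u1 t) (u2 t) * dt u2 k t + F1 eps k (u1 t) (u2 t) = 0" if k: "k \<le> m" for k
      proof -
        let ?a = "\<lambda>s. u1 (t(k := s))" and ?b = "\<lambda>s. u2 (t(k := s))"
        have ha: "(?a has_field_derivative dt u1 k t) (at (t k))"
          unfolding dt_def using diff[OF k tU] DERIV_deriv_iff_field_differentiable by blast
        have hb: "(?b has_field_derivative dt u2 k t) (at (t k))"
          unfolding dt_def using diff[OF k tU] DERIV_deriv_iff_field_differentiable by blast
        have "E eps m t (?a (t k)) (?b (t k)) * dt u1 k t + dy Gy (?a (t k)) (?b (t k)) * dt u2 k t
              + F1 eps k (?a (t k)) (?b (t k)) = 0"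
        proof (rule line_deriv[where f = Gy and g = "\<lambda>x y. F1 eps k x y" and V = "{s. t(k := s) \<in> U}"
             and a = ?a and b = ?b and tt = "t k" and a' = "dt u1 k t" and b' = "dt u2 k t"
             and fy = "dy Gy (?a (t k)) (?b (t k))" and fx = "E eps m t (?a (t k)) (?b (t k))"])
          show "\<exists>D. ((\<lambda>p. Gy (fst p) (snd p)) has_derivative D) (at (?a (t k), ?b (t k)))"
            unfolding Gy_def by (rule JD_Gy)
          show "((\<lambda>x. Gy x (?b (t k))) has_field_derivative E eps m t (?a (t k)) (?b (t k))) (at (?a (t k)))"
            unfolding Gy_def by (rule DGy_x)
          show "((\<lambda>y. Gy (?a (t k)) y) has_field_derivative dy Gy (?a (t k)) (?b (t k))) (at (?b (t k)))"
            unfolding dy_def by (rule deriv_of_ex) (unfold Gy_def, rule DGy_y_ex)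
          show "\<exists>D. ((\<lambda>p. F1 eps k (fst p) (snd p)) has_derivative D) (at (?a (t k), ?b (t k)))"
            by (rule JD_F1)
          show "\<exists>D. ((\<lambda>x. F1 eps k x (?b (t k))) has_field_derivative D) (at (?a (t k)))"
            by (rule DF1x_ex)
          show "\<exists>D. ((\<lambda>y. F1 eps k (?a (t k)) y) has_field_derivative D) (at (?b (t k)))"
            by (rule DF1y_ex)
          show "(?a has_field_derivative dt u1 k t) (at (t k))" by (rule ha)
          show "(?b has_field_derivative dt u2 k t) (at (t k))" by (rule hb)
          show "open {s. t(k := s) \<in> U}" by (rule open_line[OF U])
          show "t k \<in> {s. t(k := s) \<in> U}" using tU by simp
          fix s assume "s \<in> {s. t(k := s) \<in> U}"
          then have "t(k := s) \<in> U" by simp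
          from crit[OF this] have "(\<Sum>j\<le>m. (t(k := s)) j * F1 eps j (?a s) (?b s)) = 0"
            unfolding dyP by simp
          then show "Gy (?a s) (?b s) + (s - t k) * F1 eps k (?a s) (?b s) = 0"
            unfolding Gy_def sum_upd[OF k] by (simp add: algebra_simps)
        qed
        then show ?thesis using Ez by simp
      qed
      have k10: "dx Gx (u1 t) (u2 t) * dt u1 0 t = - eps" using key1[of 0] by (simp add: eq_neg_iff_add_eq_0)
      have k20: "dy Gy (u1 t) (u2 t) * dt u2 0 t = - 1" using key2[of 0] by (simp add: eq_neg_iff_add_eq_0)
      show "(\<forall>k\<in>{1..m}.
                   dt u1 k t = (\<Sum>i\<le>k. u1 t ^ i * F1 eps (k - i) (u1 t) (u2 t)) * dt u1 0 t
                 \<and> dt u2 k t = F1 eps k (u1 t) (u2 t) * dt u2 0 t)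
               \<and> (\<Sum>i\<le>1. u1 t ^ i * F1 eps (1 - i) (u1 t) (u2 t)) = (1 + eps) * u1 t + u2 t
               \<and> F1 eps 1 (u1 t) (u2 t) = eps * u1 t + u2 t"
      proof (intro conjI ballI)
        fix k assume "k \<in> {1..m}"
        then have k: "k \<le> m" by simp
        have "dx Gx (u1 t) (u2 t) * dt u1 k t = dx Gx (u1 t) (u2 t) * (S eps k (u1 t) (u2 t) * dt u1 0 t)"
        proof -
          have "dx Gx (u1 t) (u2 t) * dt u1 k t = - (eps * S eps k (u1 t) (u2 t))"
            using key1[OF k] by (simp add: eq_neg_iff_add_eq_0)
          also have "\<dots> = S eps k (u1 t) (u2 t) * (dx Gx (u1 t) (u2 t) * dt u1 0 t)" using k10 by simp
          finally show ?thesis by (simp add: ac_simps)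
        qed
        then have "dt u1 k t = S eps k (u1 t) (u2 t) * dt u1 0 t" using Axx by simp
        then show "dt u1 k t = (\<Sum>i\<le>k. u1 t ^ i * F1 eps (k - i) (u1 t) (u2 t)) * dt u1 0 t"
          by (simp add: S_def)
        have "dy Gy (u1 t) (u2 t) * dt u2 k t = dy Gy (u1 t) (u2 t) * (F1 eps k (u1 t) (u2 t) * dt u2 0 t)"
        proof -
          have "dy Gy (u1 t) (u2 t) * dt u2 k t = - F1 eps k (u1 t) (u2 t)"
            using key2[OF k] by (simp add: eq_neg_iff_add_eq_0)
          also have "\<dots> = F1 eps k (u1 t) (u2 t) * (dy Gy (u1 t) (u2 t) * dt u2 0 t)" using k20 by simp
          finally show ?thesis by (simp add: ac_simps)
        qed
        then show "dt u2 k t = F1 eps k (u1 t) (u2 t) * dt u2 0 t" using Byy by simp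
      next
        show "(\<Sum>i\<le>1. u1 t ^ i * F1 eps (1 - i) (u1 t) (u2 t)) = (1 + eps) * u1 t + u2 t"
          by (simp add: F1_Suc0 algebra_simps)
        show "F1 eps 1 (u1 t) (u2 t) = eps * u1 t + u2 t" by (rule F1_1)
      qed
    qed
  qed
  show ?thesis using A1 A2 A3 B by blast
qed

end
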